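(* Let $A_1,A_2$ be bounded operators on a Hilbert space and $n\ge0$ such that $\omega(A_1+A_2z)\le n$ for all $z\in\mathbb T$. Then $\omega(A_1+zA_2^* )\le n$ and $\omega(A_1^*+A_2z)\le n$ for all $z\in\mathbb T$.
   Context: $\omega(A)=\sup\{|\langle Ax,x\rangle|:\|x\|=1\}$ denotes the numerical radius; $\mathbb T$ is the unit circle. *)

theory Defs
  imports "HOL-Analysis.Analysis"
begin

text \<open>Complex inner product spaces (the library only has real inner product spaces).
  The inner product is linear in the second and conjugate-linear in the first argument;
  the norm is the one induced by the inner product.\<close>

class complex_inner = real_normed_vector +
  fixes scaleC :: "complex \<Rightarrow> 'a \<Rightarrow> 'a" (infixr \<open>*\<^sub>C\<close> 75)
  fixes cinner :: "'a \<Rightarrow> 'a \<Rightarrow> complex"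
  assumes scaleC_add_right: "a *\<^sub>C (x + y) = a *\<^sub>C x + a *\<^sub>C y"
    and scaleC_add_left: "(a + b) *\<^sub>C x = a *\<^sub>C x + b *\<^sub>C x"
    and scaleC_scaleC: "a *\<^sub>C (b *\<^sub>C x) = (a * b) *\<^sub>C x"
    and scaleC_one: "1 *\<^sub>C x = x"
    and scaleC_of_real: "(complex_of_real r) *\<^sub>C x = r *\<^sub>R x"
    and cinner_commute: "cinner x y = cnj (cinner y x)"
    and cinner_add_left: "cinner (x + y) z = cinner x z + cinner y z"
    and cinner_scaleC_left: "cinner (a *\<^sub>C x) y = cnj a * cinner x y"
    and cinner_self_norm: "cinner x x = complex_of_real ((norm x)\<^sup>2)"

class chilbert_space = complex_inner + complete_space

definition bounded_op :: "('a::complex_inner \<Rightarrow> 'a) \<Rightarrow> bool" where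
  "bounded_op T \<longleftrightarrow>
     (\<forall>x y. T (x + y) = T x + T y) \<and> (\<forall>c x. T (c *\<^sub>C x) = c *\<^sub>C T x) \<and>
     (\<exists>K. \<forall>x. norm (T x) \<le> K * norm x)"

definition is_adjoint :: "('a::complex_inner \<Rightarrow> 'a) \<Rightarrow> ('a \<Rightarrow> 'a) \<Rightarrow> bool" where
  "is_adjoint A B \<longleftrightarrow> (\<forall>x y. cinner (A x) y = cinner x (B y))"

text \<open>Numerical radius w(T) = sup{|<Tx,x>| : ||x|| = 1}; the 0 is added only so that the
  trivial space gets w(T) = 0 (it does not change the supremum otherwise).\<close>
definition numerical_radius :: "('a::complex_inner \<Rightarrow> 'a) \<Rightarrow> real" where
  "numerical_radius T = Sup ({cmod (cinner (T x) x) | x. norm x = 1} \<union> {0})"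

end

theory Submission
  imports Defs
begin

lemma cinner_add_right': "cinner x (y + z) = cinner x y + cinner x (z::'a::complex_inner)"
  by (metis cinner_commute cinner_add_left complex_cnj_add)

lemma cinner_scaleC_right': "cinner x (a *\<^sub>C (y::'a::complex_inner)) = a * cinner x y"
  by (metis cinner_commute cinner_scaleC_left complex_cnj_mult complex_cnj_cnj)

lemma cs1:
  fixes x y :: "'a::complex_inner"
  assumes "norm x = 1"
  shows "cmod (cinner y x) \<le> norm y"
proof -
  define c where "c = cinner x y"
  define v where "v = y + (-c) *\<^sub>C x"
  have xx: "cinner x x = 1" using assms cinner_self_norm[of x] by simp
  have yx: "cinner y x = cnj c" unfolding c_def by (metis cinner_commute)
  have "cinner v v = cinner y y + (-c) * cinner y x + cnj (-c) * cinner x y + cnj (-c) * (-c) * cinner x x"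
    unfolding v_def by (simp add: cinner_add_left cinner_add_right' cinner_scaleC_left cinner_scaleC_right' algebra_simps)
  also have "\<dots> = cinner y y - c * cnj c"
    using xx yx c_def by simp
  finally have e: "cinner v v = cinner y y - c * cnj c" .
  have "complex_of_real ((norm v)\<^sup>2) = complex_of_real ((norm y)\<^sup>2 - (cmod c)\<^sup>2)"
    using e cinner_self_norm[of v] cinner_self_norm[of y] complex_norm_square[of c]
    by (metis of_real_diff)
  hence "(norm v)\<^sup>2 = (norm y)\<^sup>2 - (cmod c)\<^sup>2"
    using of_real_eq_iff by blast
  hence "(cmod c)\<^sup>2 \<le> (norm y)\<^sup>2" by (smt (verit) zero_le_power2)
  hence "cmod c \<le> norm y" by (simp add: power2_le_iff_abs_le)
  thus ?thesis using yx by simp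
qed

lemma sum_bound:
  fixes a b :: complex and n :: real
  assumes "\<And>w. cmod w = 1 \<Longrightarrow> cmod (a + cnj w * b) \<le> n"
  shows "cmod a + cmod b \<le> n"
proof -
  define s where "s = (if a = 0 then 1 else sgn a)"
  have s1: "cmod s = 1" unfolding s_def by (simp add: norm_sgn)
  have as: "a = s * cmod a" unfolding s_def
    by (simp add: complex_sgn_def scaleR_conv_of_real)
  define u where "u = (if b = 0 then 1 else s * cnj (sgn b))"
  have u1: "cmod u = 1" unfolding u_def using s1 by (simp add: norm_mult norm_sgn)
  have ub: "u * b = s * cmod b"
  proof (cases "b = 0")
    case False
    have "cnj (sgn b) * b = cmod b"
    proof -
      have "cnj (sgn b) * b = cnj b * b / cmod b"
        by (simp add: sgn_div_norm scaleR_conv_of_real divide_inverse mult.commute mult.left_commute)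
      also have "\<dots> = cmod b"
        using False by (simp add: mult.commute[of "cnj b"] complex_norm_square[symmetric] power2_eq_square)
      finally show ?thesis .
    qed
    thus ?thesis using False unfolding u_def by (simp add: mult.assoc)
  qed (simp add: u_def)
  have "cmod (a + cnj (cnj u) * b) = cmod a + cmod b"
    using as ub s1 by (simp, metis distrib_left norm_mult of_real_add mult.left_neutral norm_of_real
          abs_of_nonneg add_nonneg_nonneg norm_ge_zero)
  moreover have "cmod (cnj u) = 1" using u1 by simp
  ultimately show ?thesis using assms by metis
qed

lemma nr_le:
  fixes T :: "'a::complex_inner \<Rightarrow> 'a"
  assumes "\<And>x. norm x = 1 \<Longrightarrow> cmod (cinner (T x) x) \<le> n" "n \<ge> 0"
  shows "numerical_radius T \<le> n"
  unfolding numerical_radius_def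
  by (rule cSup_least) (use assms in auto)

lemma nr_ge:
  fixes T :: "'a::complex_inner \<Rightarrow> 'a"
  assumes "\<And>x. norm x = 1 \<Longrightarrow> cmod (cinner (T x) x) \<le> K" "norm x = 1"
  shows "cmod (cinner (T x) x) \<le> numerical_radius T"
  unfolding numerical_radius_def
proof (rule cSup_upper)
  show "bdd_above ({cmod (cinner (T x) x) |x. norm x = 1} \<union> {0})"
  proof (rule bdd_aboveI[where M="max K 0"])
    fix y assume "y \<in> {cmod (cinner (T x) x) |x. norm x = 1} \<union> {0}"
    then show "y \<le> max K 0" using assms(1) by (auto simp: le_max_iff_disj)
  qed
qed (use assms in auto)

theorem lemma4p6:
  fixes A1 A2 B1 B2 :: "'a::chilbert_space \<Rightarrow> 'a" and n :: real
  assumes "bounded_op A1" and "bounded_op A2"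
    and "is_adjoint A1 B1" and "is_adjoint A2 B2"
    and "n \<ge> 0"
    and "\<forall>z. cmod z = 1 \<longrightarrow> numerical_radius (\<lambda>x. A1 x + z *\<^sub>C A2 x) \<le> n"
  shows "\<forall>z. cmod z = 1 \<longrightarrow>
           numerical_radius (\<lambda>x. A1 x + z *\<^sub>C B2 x) \<le> n \<and>
           numerical_radius (\<lambda>x. B1 x + z *\<^sub>C A2 x) \<le> n"
proof -
  obtain K1 where K1: "\<And>x. norm (A1 x) \<le> K1 * norm x" using assms(1) unfolding bounded_op_def by blast
  obtain K2 where K2: "\<And>x. norm (A2 x) \<le> K2 * norm x" using assms(2) unfolding bounded_op_def by blast
  have key: "cmod (cinner (A1 x) x) + cmod (cinner (A2 x) x) \<le> n" if x1: "norm x = 1" for x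
  proof (rule sum_bound)
    fix w :: complex assume w: "cmod w = 1"
    have eq: "\<And>y. cinner (A1 y + w *\<^sub>C A2 y) y = cinner (A1 y) y + cnj w * cinner (A2 y) y"
      by (simp add: cinner_add_left cinner_scaleC_left)
    have bd: "cmod (cinner (A1 y + w *\<^sub>C A2 y) y) \<le> K1 + K2" if "norm y = 1" for y
    proof -
      have "cmod (cinner (A1 y + w *\<^sub>C A2 y) y) \<le> cmod (cinner (A1 y) y) + cmod (cinner (A2 y) y)"
        unfolding eq using w by (metis norm_triangle_ineq norm_mult complex_mod_cnj mult_1_left)
      also have "\<dots> \<le> norm (A1 y) + norm (A2 y)" using cs1[OF that] add_mono by blast
      also have "\<dots> \<le> K1 + K2" using K1[of y] K2[of y] that by simp
      finally show ?thesis .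
    qed
    have "cmod (cinner (A1 x + w *\<^sub>C A2 x) x) \<le> numerical_radius (\<lambda>x. A1 x + w *\<^sub>C A2 x)"
      using nr_ge[where T="\<lambda>x. A1 x + w *\<^sub>C A2 x", OF bd x1] by simp
    also have "\<dots> \<le> n" using assms(6) w by blast
    finally show "cmod (cinner (A1 x) x + cnj w * cinner (A2 x) x) \<le> n" using eq by simp
  qed
  have adj1: "cinner (B1 x) x = cnj (cinner (A1 x) x)" for x
    using assms(3) unfolding is_adjoint_def by (metis cinner_commute)
  have adj2: "cinner (B2 x) x = cnj (cinner (A2 x) x)" for x
    using assms(4) unfolding is_adjoint_def by (metis cinner_commute)
  show ?thesis
  proof (intro allI impI conjI)
    fix z :: complex assume z: "cmod z = 1"
    show "numerical_radius (\<lambda>x. A1 x + z *\<^sub>C B2 x) \<le> n"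
    proof (rule nr_le[OF _ assms(5)])
      fix x :: 'a assume x1: "norm x = 1"
      have "cmod (cinner (A1 x + z *\<^sub>C B2 x) x) = cmod (cinner (A1 x) x + cnj z * cnj (cinner (A2 x) x))"
        by (simp add: cinner_add_left cinner_scaleC_left adj2)
      also have "\<dots> \<le> cmod (cinner (A1 x) x) + cmod (cinner (A2 x) x)"
        using z by (metis norm_triangle_ineq norm_mult complex_mod_cnj mult_1_left)
      also have "\<dots> \<le> n" using key[OF x1] .
      finally show "cmod (cinner (A1 x + z *\<^sub>C B2 x) x) \<le> n" .
    qed
    show "numerical_radius (\<lambda>x. B1 x + z *\<^sub>C A2 x) \<le> n"
    proof (rule nr_le[OF _ assms(5)])
      fix x :: 'a assume x1: "norm x = 1"
      have "cmod (cinner (B1 x + z *\<^sub>C A2 x) x) = cmod (cnj (cinner (A1 x) x) + cnj z * cinner (A2 x) x)"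
        by (simp add: cinner_add_left cinner_scaleC_left adj1)
      also have "\<dots> \<le> cmod (cinner (A1 x) x) + cmod (cinner (A2 x) x)"
        using z by (metis norm_triangle_ineq norm_mult complex_mod_cnj mult_1_left)
      also have "\<dots> \<le> n" using key[OF x1] .
      finally show "cmod (cinner (B1 x + z *\<^sub>C A2 x) x) \<le> n" .
    qed
  qed
qed

end
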